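(* For every $t\ge1$, $$\|\Psi_{t,1}\|\le\sqrt{\frac{\|W+LVL^\top\|\kappa_F^2}{\lambda_{\min}(W)(1-\gamma_F^2)}},\qquad \|\Sigma_t-\Sigma\|\le\kappa_F^2\gamma_F^{t-1}\|W-\Sigma\|\sqrt{\frac{\|W+LVL^\top\|}{\lambda_{\min}(W)(1-\gamma_F^2)}},$$ $$\|L_t-L\|\le\frac{\kappa_F^3\gamma_F^{t}\|W-\Sigma\|\|C\|}{\lambda_{\min}(V)}\sqrt{\frac{\|W+LVL^\top\|}{\lambda_{\min}(W)(1-\gamma_F^2)}}.$$
   Context: Standing setup. Consider the discrete-time LTI system $x_{t+1}=Ax_t+w_t$, $y_t=Cx_t+v_t$ ($t\ge0$) with $x_t\in\mathbb R^n$, $y_t\in\mathbb R^p$, $x_0=0$, $w_t\overset{iid}{\sim}\mathcal N(0,W)$, $v_t\overset{iid}{\sim}\mathcal N(0,V)$, the two noise sequences independent. Assume $(A,W^{1/2})$ is stabilizable and $(A,C)$ is detectable. Let $\Sigma\succeq0$ be the unique positive semidefinite solution of $\Sigma=A\Sigma A^\top-A\Sigma C^\top(C\Sigma C^\top+V)^{-1}C\Sigma A^\top+W$ and $L=A\Sigma C^\top(C\Sigma C^\top+V)^{-1}$. Known constants $\alpha_0,\alpha_1,\psi,\bar\sigma>0$ satisfy $\alpha_0I_n\preceq W\preceq\alpha_1I_n$, $\alpha_0I_p\preceq V\preceq\alpha_1I_p$, $\|C\|\le\psi$, $\|\Sigma\|\le\bar\sigma$. Set $\kappa_F=\sqrt{\bar\sigma/\alpha_0}$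 and $\gamma_F=1-\frac{\alpha_0}{2\bar\sigma}$. $\|\cdot\|$ is the Euclidean/spectral norm and $\|\cdot\|_F$ the Frobenius norm. Finite-horizon Kalman recursion: $\Sigma_0=0$, $\Sigma_{t+1}=A\Sigma_tA^\top-A\Sigma_tC^\top(C\Sigma_tC^\top+V)^{-1}C\Sigma_tA^\top+W$, and $L_t=A\Sigma_tC^\top(C\Sigma_tC^\top+V)^{-1}$. For integers $k>l\ge0$, $\Psi_{k,l}=(A-L_{k-1}C)(A-L_{k-2}C)\cdots(A-L_lC)$, and $\Psi_{k,l}=I_n$ if $k\le l$. $\lambda_{\min}$ denotes the smallest eigenvalue. *)

theory Defs
  imports "HOL-Analysis.Analysis"
begin

type_synonym ('m,'n) rmat = "real^'n^'m"

definition spec_norm :: "real^'n^'m \<Rightarrow> real" where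
  "spec_norm M = onorm (\<lambda>x. M *v x)"

definition symm :: "real^'n^'n \<Rightarrow> bool" where
  "symm M \<longleftrightarrow> transpose M = M"

definition psd :: "real^'n^'n \<Rightarrow> bool" where
  "psd M \<longleftrightarrow> symm M \<and> (\<forall>x. 0 \<le> x \<bullet> (M *v x))"

definition loewner_le :: "real^'n^'n \<Rightarrow> real^'n^'n \<Rightarrow> bool" where
  "loewner_le M N \<longleftrightarrow> psd (N - M)"

text \<open>Smallest eigenvalue (used only for symmetric matrices, whose eigenvalues are real).\<close>
definition lambda_min :: "real^'n^'n \<Rightarrow> real" where
  "lambda_min M = Min {l. \<exists>v. v \<noteq> 0 \<and> M *v v = l *\<^sub>R v}"

definition matpow :: "real^'n^'n \<Rightarrow> nat \<Rightarrow> real^'n^'n" where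
  "matpow M k = ((\<lambda>N. M ** N) ^^ k) (mat 1)"

text \<open>Schur stability (spectral radius < 1), expressed as M^k \<rightarrow> 0.\<close>
definition schur_stable :: "real^'n^'n \<Rightarrow> bool" where
  "schur_stable M \<longleftrightarrow> (\<lambda>k. matpow M k) \<longlonglongrightarrow> 0"

definition stabilizable :: "real^'n^'n \<Rightarrow> real^'k^'n \<Rightarrow> bool" where
  "stabilizable A B \<longleftrightarrow> (\<exists>K :: real^'n^'k. schur_stable (A + B ** K))"

definition detectable :: "real^'n^'n \<Rightarrow> real^'n^'p \<Rightarrow> bool" where
  "detectable A C \<longleftrightarrow> (\<exists>L :: real^'p^'n. schur_stable (A + L ** C))"

definition riccati ::
  "real^'n^'n \<Rightarrow> real^'n^'p \<Rightarrow> real^'n^'n \<Rightarrow> real^'p^'p \<Rightarrow> real^'n^'n \<Rightarrow> real^'n^'n" where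
  "riccati A C W V S =
     A ** S ** transpose A
     - A ** S ** transpose C ** matrix_inv (C ** S ** transpose C + V) ** C ** S ** transpose A
     + W"

definition kgain ::
  "real^'n^'n \<Rightarrow> real^'n^'p \<Rightarrow> real^'p^'p \<Rightarrow> real^'n^'n \<Rightarrow> real^'p^'n" where
  "kgain A C V S = A ** S ** transpose C ** matrix_inv (C ** S ** transpose C + V)"

primrec kf_Sigma ::
  "real^'n^'n \<Rightarrow> real^'n^'p \<Rightarrow> real^'n^'n \<Rightarrow> real^'p^'p \<Rightarrow> nat \<Rightarrow> real^'n^'n" where
  "kf_Sigma A C W V 0 = 0"
| "kf_Sigma A C W V (Suc t) = riccati A C W V (kf_Sigma A C W V t)"

definition kf_L ::
  "real^'n^'n \<Rightarrow> real^'n^'p \<Rightarrow> real^'n^'n \<Rightarrow> real^'p^'p \<Rightarrow> nat \<Rightarrow> real^'p^'n" where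
  "kf_L A C W V t = kgain A C V (kf_Sigma A C W V t)"

fun kf_Psi ::
  "real^'n^'n \<Rightarrow> real^'n^'p \<Rightarrow> real^'n^'n \<Rightarrow> real^'p^'p \<Rightarrow> nat \<Rightarrow> nat \<Rightarrow> real^'n^'n" where
  "kf_Psi A C W V 0 l = mat 1"
| "kf_Psi A C W V (Suc k) l =
     (if Suc k \<le> l then mat 1
      else (A - kf_L A C W V k ** C) ** kf_Psi A C W V k l)"

end

theory Submission
  imports Defs
begin


lemma sn_bound: "norm ((M::real^'n^'m) *v x) \<le> spec_norm M * norm x"
  unfolding spec_norm_def by (rule onorm[OF matrix_vector_mul_bounded_linear])

lemma sn_le: "(\<And>x. norm ((M::real^'n^'m) *v x) \<le> b * norm x) \<Longrightarrow> spec_norm M \<le> b"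
  unfolding spec_norm_def by (rule onorm_le)

lemma sn_nonneg: "0 \<le> spec_norm (M::real^'n^'m)"
  unfolding spec_norm_def by (rule onorm_pos_le[OF matrix_vector_mul_bounded_linear])

lemma dot_transpose: "y \<bullet> ((M::real^'n^'m) *v x) = (transpose M *v y) \<bullet> x"
  by (simp add: dot_lmul_matrix)

lemma sn_transpose_le: "spec_norm (M::real^'n^'m) \<le> spec_norm (transpose M)"
proof (rule sn_le)
  fix x
  have "norm (M *v x) ^ 2 = (transpose M *v (M *v x)) \<bullet> x"
    by (simp add: power2_norm_eq_inner dot_transpose)
  also have "\<dots> \<le> norm (transpose M *v (M *v x)) * norm x"
    by (rule Cauchy_Schwarz_ineq2[THEN order_trans[OF abs_ge_self]])
  also have "\<dots> \<le> spec_norm (transpose M) * norm (M *v x) * norm x"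
    by (rule mult_right_mono[OF sn_bound norm_ge_zero])
  finally have *: "norm (M *v x) * norm (M *v x) \<le> (spec_norm (transpose M) * norm x) * norm (M *v x)"
    by (simp add: power2_eq_square mult_ac)
  show "norm (M *v x) \<le> spec_norm (transpose M) * norm x"
  proof (cases "M *v x = 0")
    case True then show ?thesis using sn_nonneg[of "transpose M"] by simp
  next
    case False then show ?thesis using * by (simp add: mult_le_cancel_right)
  qed
qed

lemma sn_transpose: "spec_norm (transpose (M::real^'n^'m)) = spec_norm M"
  using sn_transpose_le[of M] sn_transpose_le[of "transpose M"] by simp

lemma symm_dot: "symm V \<Longrightarrow> x \<bullet> (V *v y) = y \<bullet> ((V::real^'n^'n) *v x)"
  unfolding symm_def by (metis dot_transpose inner_commute)

lemma smat_vec: "(c *\<^sub>R mat 1) *v (y::real^'n) = c *\<^sub>R y"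
  by (metis scaleR_matrix_vector_assoc matrix_vector_mul_lid)

lemma eig_min:
  fixes V :: "real^'n^'n"
  assumes sV: "symm V"
  shows "(\<forall>x. lambda_min V * (norm x)^2 \<le> x \<bullet> (V *v x)) \<and> (\<exists>v. v \<noteq> 0 \<and> V *v v = lambda_min V *\<^sub>R v)"
proof -
  define f where "f = (\<lambda>x::real^'n. x \<bullet> (V *v x))"
  have cont: "continuous_on (sphere 0 1) f" unfolding f_def
    by (intro continuous_intros continuous_on_compose2[OF linear_continuous_on] matrix_vector_mul_bounded_linear) auto
  obtain i :: 'n where True by simp
  have ne: "sphere (0::real^'n) 1 \<noteq> {}" by (auto simp: sphere_def intro!: exI[of _ "axis i 1"])
  obtain u where u: "u \<in> sphere 0 1" and umin: "\<And>y. y \<in> sphere 0 1 \<Longrightarrow> f u \<le> f y"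
    using continuous_attains_inf[OF compact_sphere ne cont] by blast
  define m where "m = f u"
  have fscale: "f (c *\<^sub>R x) = c^2 * f x" for c x
    by (simp add: f_def matrix_vector_mult_scaleR power2_eq_square)
  have lb: "m * (norm x)^2 \<le> f x" for x
  proof (cases "x = 0")
    case True then show ?thesis by (simp add: f_def)
  next
    case False
    then have "(inverse (norm x)) *\<^sub>R x \<in> sphere 0 1" by simp
    then have "m \<le> f ((inverse (norm x)) *\<^sub>R x)" using umin m_def by blast
    also have "\<dots> = f x / (norm x)^2" by (simp add: fscale power_inverse divide_inverse mult_ac)
    finally show ?thesis using False by (simp add: field_simps)
  qed
  define P where "P = V - m *\<^sub>R mat 1"
  have Pq: "y \<bullet> (P *v y) = f y - m * (norm y)^2" for y
    by (simp add: P_def f_def matrix_vector_mult_diff_rdistrib power2_norm_eq_inner smat_vec inner_diff_right)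
  have Pnn: "0 \<le> y \<bullet> (P *v y)" for y using Pq lb by simp
  have nu: "norm u = 1" using u by simp
  have Pu0: "u \<bullet> (P *v u) = 0" using Pq nu m_def by simp
  have Psymm: "x \<bullet> (P *v y) = y \<bullet> (P *v x)" for x y
    using symm_dot[OF sV, of x y] by (simp add: P_def matrix_vector_mult_diff_rdistrib inner_diff_right inner_commute smat_vec)
  have expand: "(u + t *\<^sub>R y) \<bullet> (P *v (u + t *\<^sub>R y)) = u \<bullet> (P *v u) + 2 * t * (y \<bullet> (P *v u)) + t^2 * (y \<bullet> (P *v y))" for t y
    using Psymm[of u y]
    by (simp add: matrix_vector_right_distrib matrix_vector_mult_scaleR inner_add_left inner_add_right power2_eq_square algebra_simps)
  have "P *v u = 0"
  proof (rule ccontr)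
    assume ne0: "P *v u \<noteq> 0"
    define y where "y = P *v u"
    define a where "a = y \<bullet> (P *v u)"
    define b where "b = y \<bullet> (P *v y)"
    have a: "a > 0" using ne0 by (simp add: a_def y_def)
    have b: "b \<ge> 0" using Pnn b_def by simp
    define d where "d = b + 1"
    have d: "d > 0" using b by (simp add: d_def)
    define r where "r = a / d"
    have r: "r > 0" using a d by (simp add: r_def)
    have ar: "a = r * d" using d by (simp add: r_def)
    define t where "t = - r"
    have "0 \<le> 2 * t * a + t^2 * b" using Pnn[of "u + t *\<^sub>R y"] expand[of t y] Pu0 a_def b_def by simp
    also have "\<dots> = r^2 * (b - 2 * d)" unfolding t_def ar by (simp add: power2_eq_square algebra_simps)
    also have "\<dots> < 0"
    proof (rule mult_pos_neg)
      show "0 < r^2" using r by simp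
      show "b - 2 * d < 0" using b by (simp add: d_def)
    qed
    finally show False by simp
  qed
  then have eu: "V *v u = m *\<^sub>R u" by (simp add: P_def matrix_vector_mult_diff_rdistrib smat_vec)
  have u0: "u \<noteq> 0" using nu by auto
  define E where "E = {l. \<exists>v. v \<noteq> 0 \<and> V *v v = l *\<^sub>R v}"
  have mE: "m \<in> E" unfolding E_def mem_Collect_eq by (rule exI[of _ u]) (use eu u0 in simp)
  have Elb: "m \<le> l" if "l \<in> E" for l
  proof -
    have "\<exists>v. v \<noteq> 0 \<and> V *v v = l *\<^sub>R v" using that unfolding E_def mem_Collect_eq .
    then obtain v where vv: "v \<noteq> 0 \<and> V *v v = l *\<^sub>R v" by (rule exE)
    note v = conjunct1[OF vv] conjunct2[OF vv]
    have fv: "f v = l * (norm v)^2" unfolding f_def by (simp only: v(2) inner_scaleR_right power2_norm_eq_inner)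
    have nv: "(norm v)^2 > 0" using v(1) by simp
    have "m * (norm v)^2 \<le> l * (norm v)^2" using lb[of v] unfolding fv .
    then show ?thesis by (rule mult_le_cancel_right_pos[OF nv, THEN iffD1])
  qed
  define ev where "ev l = (SOME v. v \<noteq> 0 \<and> V *v v = l *\<^sub>R v)" for l
  have ev: "ev l \<noteq> 0 \<and> V *v ev l = l *\<^sub>R ev l" if "l \<in> E" for l
    using that unfolding E_def ev_def mem_Collect_eq by (rule someI_ex)
  have orth: "ev l \<bullet> ev k = 0" if "l \<in> E" "k \<in> E" "l \<noteq> k" for l k
  proof -
    have "l * (ev l \<bullet> ev k) = ev k \<bullet> (V *v ev l)" using ev[OF that(1)] by (simp add: inner_commute)
    also have "\<dots> = ev l \<bullet> (V *v ev k)" using symm_dot[OF sV] by simp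
    also have "\<dots> = k * (ev l \<bullet> ev k)" using ev[OF that(2)] by simp
    finally show ?thesis using that(3) by simp
  qed
  have injE: "inj_on ev E"
  proof (rule inj_onI)
    fix l k assume lk: "l \<in> E" "k \<in> E" "ev l = ev k"
    show "l = k"
    proof (rule ccontr)
      assume "l \<noteq> k"
      then have "ev l \<bullet> ev l = 0" using orth[OF lk(1,2)] lk(3) by simp
      then show False using ev[OF lk(1)] by simp
    qed
  qed
  have "pairwise orthogonal (ev ` E)"
    unfolding pairwise_def orthogonal_def using orth by (metis imageE)
  then have "finite (ev ` E)" by (rule pairwise_orthogonal_imp_finite)
  then have finE: "finite E" using finite_imageD injE by blast
  have "lambda_min V = m" unfolding lambda_min_def E_def[symmetric]
    by (rule Min_eqI[OF finE Elb mE])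
  then show ?thesis using lb eu u0 by (auto simp: f_def)
qed



lemma mm_rdistrib: "((X::real^'n^'m) + Y) ** Z = X ** Z + Y ** Z"
  by (simp add: matrix_matrix_mult_def vec_eq_iff sum.distrib distrib_right)
lemma mm_ldiff: "(X::real^'n^'m) ** (Y - Z) = X ** Y - X ** Z"
  by (simp add: matrix_matrix_mult_def vec_eq_iff sum_subtractf right_diff_distrib)
lemma mm_rdiff: "((X::real^'n^'m) - Y) ** Z = X ** Z - Y ** Z"
  by (simp add: matrix_matrix_mult_def vec_eq_iff sum_subtractf left_diff_distrib)
lemma tr_add: "transpose ((X::real^'n^'m) + Y) = transpose X + transpose Y"
  by (simp add: transpose_def vec_eq_iff)
lemma tr_diff: "transpose ((X::real^'n^'m) - Y) = transpose X - transpose Y"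
  by (simp add: transpose_def vec_eq_iff)
lemma tr_zero: "transpose (0::real^'n^'m) = 0"
  by (simp add: transpose_def vec_eq_iff)

lemmas malg = matrix_mul_assoc matrix_add_ldistrib mm_rdistrib mm_ldiff mm_rdiff matrix_transpose_mul tr_add tr_diff

lemma minv:
  assumes "invertible (M::real^'n^'n)"
  shows "M ** matrix_inv M = mat 1" "matrix_inv M ** M = mat 1"
proof -
  have "\<exists>N. M ** N = mat 1 \<and> N ** M = mat 1" using assms unfolding invertible_def by blast
  then have "M ** matrix_inv M = mat 1 \<and> matrix_inv M ** M = mat 1"
    unfolding matrix_inv_def by (rule someI_ex)
  then show "M ** matrix_inv M = mat 1" "matrix_inv M ** M = mat 1" by auto
qed

lemma minv_sym:
  assumes "invertible (M::real^'n^'n)" "symm M"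
  shows "transpose (matrix_inv M) = matrix_inv M"
proof -
  let ?N = "matrix_inv M"
  have "transpose ?N ** M = mat 1"
    using minv(1)[OF assms(1)] assms(2) unfolding symm_def
    by (metis matrix_transpose_mul transpose_mat)
  then have "transpose ?N = transpose ?N ** (M ** ?N)" using minv(1)[OF assms(1)] by simp
  also have "\<dots> = ?N" by (simp add: matrix_mul_assoc \<open>transpose ?N ** M = mat 1\<close>)
  finally show ?thesis .
qed

lemma G_alg:
  fixes A S W :: "real^'n^'n" and C :: "real^'n^'p" and V M Mi :: "real^'p^'p" and K K2 :: "real^'p^'n"
  assumes e1: "K2 ** C ** S ** transpose C = K2 ** M - K2 ** V"
    and e2: "K2 ** M ** Mi = K2"
    and hKt: "transpose K = Mi ** C ** S ** transpose A"
  shows "(A - K2 ** C) ** S ** transpose (A - K ** C)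
     = (A ** S ** transpose A - A ** S ** transpose C ** Mi ** C ** S ** transpose A + W) - W - K2 ** V ** transpose K"
  by (simp add: malg hKt e1 e2 algebra_simps)

lemma compl_alg:
  fixes A S W :: "real^'n^'n" and C :: "real^'n^'p" and V M Mi :: "real^'p^'p" and K Ks :: "real^'p^'n"
  assumes e1: "K ** C ** S ** transpose C = K ** M - K ** V"
    and e2: "\<And>X::real^'p^'n. X ** M ** Mi = X"
    and e3: "\<And>X::real^'p^'n. X ** Mi ** M = X"
    and hKs: "Ks = A ** S ** transpose C ** Mi"
    and hKst: "transpose Ks = Mi ** C ** S ** transpose A"
  shows "(A - K ** C) ** S ** transpose (A - K ** C) + W + K ** V ** transpose K
     = (A ** S ** transpose A - A ** S ** transpose C ** Mi ** C ** S ** transpose A + W) + (K - Ks) ** M ** transpose (K - Ks)"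
proof -
  have e4: "Ks ** M = A ** S ** transpose C" using e3 hKs by simp
  have e5: "Ks ** C ** S ** transpose A = A ** S ** transpose C ** Mi ** C ** S ** transpose A"
    using hKs by simp
  show ?thesis by (simp add: malg hKst e1 e2 e4 e5 algebra_simps)
qed



lemma qf_sand: "x \<bullet> ((B ** S ** transpose B) *v x) = (transpose B *v x) \<bullet> (S *v (transpose B *v x))"
  for B :: "real^'m^'n" and S :: "real^'m^'m"
proof -
  have "(B ** S ** transpose B) *v x = B *v (S *v (transpose B *v x))"
    by (simp only: matrix_vector_mul_assoc[symmetric])
  then show ?thesis using dot_transpose[of x B "S *v (transpose B *v x)"] by simp
qed

lemma qf_add: "x \<bullet> ((X + Y) *v x) = x \<bullet> (X *v x) + x \<bullet> (Y *v x)" for X Y :: "real^'n^'n"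
  by (simp add: matrix_vector_mult_add_rdistrib inner_add_right)

lemma psd_nn: "psd S \<Longrightarrow> 0 \<le> x \<bullet> (S *v x)" unfolding psd_def by blast

lemma symm_sand: "symm S \<Longrightarrow> symm (B ** S ** transpose B)"
  unfolding symm_def by (simp add: matrix_transpose_mul matrix_mul_assoc)

lemma symm_add: "symm X \<Longrightarrow> symm Y \<Longrightarrow> symm (X + Y)"
  unfolding symm_def by (simp add: tr_add)

lemma symm_diff: "symm X \<Longrightarrow> symm Y \<Longrightarrow> symm (X - Y)"
  unfolding symm_def by (simp add: tr_diff)

lemma kgain_t:
  fixes A S :: "real^'n^'n" and C :: "real^'n^'p" and V :: "real^'p^'p"
  assumes sS: "symm S" and sV: "symm V" and inv: "invertible (C ** S ** transpose C + V)"
  shows "transpose (kgain A C V S) = matrix_inv (C ** S ** transpose C + V) ** C ** S ** transpose A"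
proof -
  have sM: "symm (C ** S ** transpose C + V)" by (intro symm_add symm_sand sS sV)
  show ?thesis unfolding kgain_def
    using minv_sym[OF inv sM] sS unfolding symm_def by (simp add: matrix_transpose_mul matrix_mul_assoc)
qed

lemma ric_G:
  fixes A S W :: "real^'n^'n" and C :: "real^'n^'p" and V :: "real^'p^'p" and K2 :: "real^'p^'n"
  assumes sS: "symm S" and sV: "symm V" and inv: "invertible (C ** S ** transpose C + V)"
  shows "(A - K2 ** C) ** S ** transpose (A - kgain A C V S ** C)
     = riccati A C W V S - W - K2 ** V ** transpose (kgain A C V S)"
proof -
  define M where "M = C ** S ** transpose C + V"
  have e1: "K2 ** C ** S ** transpose C = K2 ** M - K2 ** V"
    unfolding M_def by (simp add: matrix_add_ldistrib matrix_mul_assoc)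
  have e2: "K2 ** M ** matrix_inv M = K2"
    using minv(1)[OF inv] unfolding M_def by (simp flip: matrix_mul_assoc)
  show ?thesis
    using G_alg[OF e1 e2 kgain_t[OF sS sV inv, of A, folded M_def], of W]
    unfolding riccati_def M_def by simp
qed

lemma ric_compl:
  fixes A S W :: "real^'n^'n" and C :: "real^'n^'p" and V :: "real^'p^'p" and K :: "real^'p^'n"
  assumes sS: "symm S" and sV: "symm V" and inv: "invertible (C ** S ** transpose C + V)"
  shows "(A - K ** C) ** S ** transpose (A - K ** C) + W + K ** V ** transpose K
     = riccati A C W V S + (K - kgain A C V S) ** (C ** S ** transpose C + V) ** transpose (K - kgain A C V S)"
proof -
  define M where "M = C ** S ** transpose C + V"
  have e1: "K ** C ** S ** transpose C = K ** M - K ** V"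
    unfolding M_def by (simp add: matrix_add_ldistrib matrix_mul_assoc)
  have e2: "X ** M ** matrix_inv M = X" for X :: "real^'p^'n"
    using minv(1)[OF inv] unfolding M_def by (simp flip: matrix_mul_assoc)
  have e3: "X ** matrix_inv M ** M = X" for X :: "real^'p^'n"
    using minv(2)[OF inv] unfolding M_def by (simp flip: matrix_mul_assoc)
  have hKs: "kgain A C V S = A ** S ** transpose C ** matrix_inv M" unfolding kgain_def M_def ..
  show ?thesis
    using compl_alg[OF e1 e2 e3 hKs kgain_t[OF sS sV inv, of A, folded M_def], of W]
    unfolding riccati_def M_def by simp
qed



declare transpose_matrix_vector[simp del]

lemma mv_tr_mul: "transpose (X ** Y) *v x = transpose Y *v (transpose X *v x)" for X :: "real^'n^'m" and Y :: "real^'k^'n"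
  by (simp add: matrix_transpose_mul matrix_vector_mul_assoc)

locale kf =
  fixes A W Sig :: "real^'n^'n" and C :: "real^'n^'p" and V :: "real^'p^'p" and a0 sb :: real
  assumes W_psd: "psd W" and V_psd: "psd V" and a0: "a0 > 0"
    and Wlo: "\<And>x. a0 * (norm x)^2 \<le> x \<bullet> (W *v x)"
    and Vlo: "\<And>x. a0 * (norm x)^2 \<le> x \<bullet> (V *v x)"
    and Sig_psd: "psd Sig" and dare: "Sig = riccati A C W V Sig"
    and Sig_ub: "\<And>x. x \<bullet> (Sig *v x) \<le> sb * (norm x)^2"
begin

lemma sV: "symm V" using V_psd psd_def by blast
lemma sW: "symm W" using W_psd psd_def by blast
lemma sSig: "symm Sig" using Sig_psd psd_def by blast

lemma Minv:
  assumes "psd S"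
  shows "invertible (C ** S ** transpose C + V)"
    and "x \<bullet> (V *v x) \<le> x \<bullet> ((C ** S ** transpose C + V) *v x)"
proof -
  have q: "x \<bullet> ((C ** S ** transpose C + V) *v x) = (transpose C *v x) \<bullet> (S *v (transpose C *v x)) + x \<bullet> (V *v x)" for x
    using qf_add qf_sand by metis
  show 2: "x \<bullet> (V *v x) \<le> x \<bullet> ((C ** S ** transpose C + V) *v x)" for x
    using q psd_nn[OF assms] by (metis le_add_same_cancel2)
  have "x = 0" if h: "(C ** S ** transpose C + V) *v x = 0" for x
  proof -
    have "a0 * (norm x)^2 \<le> 0" using 2[of x] h Vlo[of x] by simp
    then show ?thesis using a0 by (simp add: mult_le_0_iff)
  qed
  then show "invertible (C ** S ** transpose C + V)"
    unfolding invertible_left_inverse matrix_left_invertible_ker by blast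
qed

lemma symmS: "psd S \<Longrightarrow> symm S" unfolding psd_def by blast

lemma ric_dec:
  assumes "psd S"
  shows "riccati A C W V S = (A - kgain A C V S ** C) ** S ** transpose (A - kgain A C V S ** C) + W
            + kgain A C V S ** V ** transpose (kgain A C V S)"
  using ric_G[OF symmS[OF assms] sV Minv(1)[OF assms], of A "kgain A C V S" W]
  by (simp add: algebra_simps)

lemma ric_qf:
  assumes "psd S"
  shows "x \<bullet> (riccati A C W V S *v x)
     = (transpose (A - kgain A C V S ** C) *v x) \<bullet> (S *v (transpose (A - kgain A C V S ** C) *v x))
       + x \<bullet> (W *v x) + (transpose (kgain A C V S) *v x) \<bullet> (V *v (transpose (kgain A C V S) *v x))"
  by (subst ric_dec[OF assms]) (simp only: qf_add qf_sand)

lemma ric_geW: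
  assumes "psd S"
  shows "x \<bullet> (W *v x) \<le> x \<bullet> (riccati A C W V S *v x)"
  using ric_qf[OF assms, of x] psd_nn[OF assms] psd_nn[OF V_psd] by (smt (verit))

lemma ric_psd:
  assumes "psd S"
  shows "psd (riccati A C W V S)"
  unfolding psd_def
proof
  show "symm (riccati A C W V S)"
    by (subst ric_dec[OF assms]) (intro symm_add symm_sand symmS assms sW sV)
  show "\<forall>x. 0 \<le> x \<bullet> (riccati A C W V S *v x)"
    using ric_geW[OF assms] psd_nn[OF W_psd] order_trans by blast
qed

lemma ric_le:
  assumes "psd S"
  shows "x \<bullet> (riccati A C W V S *v x)
     \<le> (transpose (A - K ** C) *v x) \<bullet> (S *v (transpose (A - K ** C) *v x))
       + x \<bullet> (W *v x) + (transpose K *v x) \<bullet> (V *v (transpose K *v x))"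
proof -
  have e: "(A - K ** C) ** S ** transpose (A - K ** C) + W + K ** V ** transpose K
     = riccati A C W V S + (K - kgain A C V S) ** (C ** S ** transpose C + V) ** transpose (K - kgain A C V S)"
    by (rule ric_compl[OF symmS[OF assms] sV Minv(1)[OF assms]])
  have "x \<bullet> (((A - K ** C) ** S ** transpose (A - K ** C) + W + K ** V ** transpose K) *v x)
     = x \<bullet> (riccati A C W V S *v x) + (transpose (K - kgain A C V S) *v x) \<bullet> ((C ** S ** transpose C + V) *v (transpose (K - kgain A C V S) *v x))"
    by (simp only: e qf_add qf_sand)
  moreover have "0 \<le> (transpose (K - kgain A C V S) *v x) \<bullet> ((C ** S ** transpose C + V) *v (transpose (K - kgain A C V S) *v x))"
    using Minv(2)[OF assms] psd_nn[OF V_psd] order_trans by blast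
  ultimately show ?thesis by (simp only: qf_add qf_sand)
qed

abbreviation "St t \<equiv> kf_Sigma A C W V t"
abbreviation "Lg t \<equiv> kf_L A C W V t"
abbreviation "LK \<equiv> kgain A C V Sig"

lemma St_psd_le: "psd (St t) \<and> (\<forall>x. x \<bullet> (St t *v x) \<le> x \<bullet> (Sig *v x))"
proof (induction t)
  case 0
  have "psd (0::real^'n^'n)" unfolding psd_def symm_def by (simp add: tr_zero)
  then show ?case using psd_nn[OF Sig_psd] by simp
next
  case (Suc t)
  then have p: "psd (St t)" and le: "\<And>x. x \<bullet> (St t *v x) \<le> x \<bullet> (Sig *v x)" by auto
  have "x \<bullet> (St (Suc t) *v x) \<le> x \<bullet> (Sig *v x)" for x
  proof -
    have "x \<bullet> (St (Suc t) *v x) \<le> (transpose (A - LK ** C) *v x) \<bullet> (St t *v (transpose (A - LK ** C) *v x))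
       + x \<bullet> (W *v x) + (transpose LK *v x) \<bullet> (V *v (transpose LK *v x))"
      using ric_le[OF p] by simp
    also have "\<dots> \<le> (transpose (A - LK ** C) *v x) \<bullet> (Sig *v (transpose (A - LK ** C) *v x))
       + x \<bullet> (W *v x) + (transpose LK *v x) \<bullet> (V *v (transpose LK *v x))"
      using le by simp
    also have "\<dots> = x \<bullet> (riccati A C W V Sig *v x)" using ric_qf[OF Sig_psd] by simp
    also have "\<dots> = x \<bullet> (Sig *v x)" using dare by simp
    finally show ?thesis .
  qed
  then show ?case using ric_psd[OF p] by simp
qed

lemma St_psd: "psd (St t)" using St_psd_le by blast
lemma St_le: "x \<bullet> (St t *v x) \<le> x \<bullet> (Sig *v x)" using St_psd_le by blast

lemma St_geW: "t \<ge> 1 \<Longrightarrow> a0 * (norm x)^2 \<le> x \<bullet> (St t *v x)"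
proof -
  assume "t \<ge> 1"
  then obtain k where k: "t = Suc k" by (cases t) auto
  show ?thesis using ric_geW[OF St_psd[of k], of x] Wlo[of x] k by simp
qed

lemma Sig_geW: "a0 * (norm x)^2 \<le> x \<bullet> (Sig *v x)"
  using ric_geW[OF Sig_psd, of x] Wlo[of x] dare by simp

lemma Psi_bd:
  assumes "t \<ge> 1"
  shows "a0 * (norm (transpose (kf_Psi A C W V t 1) *v x))^2 \<le> x \<bullet> (St t *v x)"
  using assms
proof (induction t arbitrary: x rule: dec_induct)
  case base
  then show ?case using St_geW[of 1 x] by simp
next
  case (step n)
  have P: "kf_Psi A C W V (Suc n) 1 = (A - Lg n ** C) ** kf_Psi A C W V n 1" using step(1) by simp
  let ?y = "transpose (A - Lg n ** C) *v x"
  have "a0 * (norm (transpose (kf_Psi A C W V (Suc n) 1) *v x))^2 = a0 * (norm (transpose (kf_Psi A C W V n 1) *v ?y))^2"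
    by (simp only: P mv_tr_mul)
  also have "\<dots> \<le> ?y \<bullet> (St n *v ?y)" by (rule step.IH)
  also have "\<dots> \<le> x \<bullet> (St (Suc n) *v x)"
    using ric_qf[OF St_psd[of n], of x] psd_nn[OF V_psd] psd_nn[OF W_psd] unfolding kf_L_def by simp
  finally show ?case .
qed

end


context kf begin

lemma a0_le_sb: "a0 \<le> sb"
proof -
  obtain i :: 'n where True by simp
  have "a0 * (norm (axis i (1::real)))^2 \<le> sb * (norm (axis i (1::real)))^2"
    using Sig_geW Sig_ub order_trans by blast
  then show ?thesis by simp
qed

lemma sb_pos: "sb > 0" using a0 a0_le_sb by simp

lemma Phit_bd:
  assumes "t \<ge> 1"
  shows "a0 * (norm (transpose (A - Lg t ** C) *v x))^2 \<le> (sb - a0) * (norm x)^2"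
proof -
  let ?y = "transpose (A - Lg t ** C) *v x"
  have "a0 * (norm ?y)^2 \<le> ?y \<bullet> (St t *v ?y)" by (rule St_geW[OF assms])
  also have "\<dots> \<le> x \<bullet> (St (Suc t) *v x) - x \<bullet> (W *v x)"
    using ric_qf[OF St_psd[of t], of x] psd_nn[OF V_psd] unfolding kf_L_def by simp
  also have "\<dots> \<le> sb * (norm x)^2 - a0 * (norm x)^2"
    using St_le[where t="Suc t" and x=x] Sig_ub[of x] Wlo[of x] by simp
  finally show ?thesis by (simp add: algebra_simps)
qed

definition "ff y = transpose (A - LK ** C) *v y"

lemma ff_step: "ff y \<bullet> (Sig *v ff y) \<le> (1 - a0 / sb) * (y \<bullet> (Sig *v y))"
proof -
  have q: "y \<bullet> (Sig *v y) = ff y \<bullet> (Sig *v ff y) + y \<bullet> (W *v y) + (transpose LK *v y) \<bullet> (V *v (transpose LK *v y))"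
    using ric_qf[OF Sig_psd, of y] dare unfolding ff_def by simp
  have "(a0 / sb) * (y \<bullet> (Sig *v y)) \<le> (a0 / sb) * (sb * (norm y)^2)"
    by (rule mult_left_mono[OF Sig_ub]) (use a0 sb_pos in simp)
  also have "\<dots> = a0 * (norm y)^2" using sb_pos by simp
  finally have "(a0 / sb) * (y \<bullet> (Sig *v y)) \<le> y \<bullet> (W *v y)" using Wlo[of y] by simp
  moreover have "(1 - a0 / sb) * (y \<bullet> (Sig *v y)) = y \<bullet> (Sig *v y) - (a0 / sb) * (y \<bullet> (Sig *v y))"
    by (simp add: algebra_simps)
  ultimately show ?thesis using q psd_nn[OF V_psd, of "transpose LK *v y"] by linarith
qed

lemma ff_pow: "(ff ^^ k) y \<bullet> (Sig *v (ff ^^ k) y) \<le> (1 - a0 / sb) ^ k * (y \<bullet> (Sig *v y))"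
proof (induction k)
  case 0 then show ?case by simp
next
  case (Suc k)
  have r: "0 \<le> 1 - a0 / sb" using a0_le_sb sb_pos by simp
  have "(ff ^^ Suc k) y \<bullet> (Sig *v (ff ^^ Suc k) y) \<le> (1 - a0 / sb) * ((ff ^^ k) y \<bullet> (Sig *v (ff ^^ k) y))"
    using ff_step by simp
  also have "\<dots> \<le> (1 - a0 / sb) * ((1 - a0 / sb) ^ k * (y \<bullet> (Sig *v y)))"
    by (rule mult_left_mono[OF Suc.IH r])
  finally show ?case by simp
qed

lemma ff_pow_norm: "a0 * (norm ((ff ^^ k) y))^2 \<le> (1 - a0 / sb) ^ k * sb * (norm y)^2"
proof -
  have r: "0 \<le> 1 - a0 / sb" using a0_le_sb sb_pos by simp
  have "a0 * (norm ((ff ^^ k) y))^2 \<le> (ff ^^ k) y \<bullet> (Sig *v (ff ^^ k) y)" by (rule Sig_geW)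
  also have "\<dots> \<le> (1 - a0 / sb) ^ k * (y \<bullet> (Sig *v y))" by (rule ff_pow)
  also have "\<dots> \<le> (1 - a0 / sb) ^ k * (sb * (norm y)^2)"
    by (rule mult_left_mono[OF Sig_ub zero_le_power[OF r]])
  finally show ?thesis by simp
qed

lemma St1: "St 1 = W" by (simp add: riccati_def)

lemma M1: "St (Suc t) - Sig = (A - LK ** C) ** (St t - Sig) ** transpose (A - Lg t ** C)"
proof -
  have g1: "(A - LK ** C) ** St t ** transpose (A - Lg t ** C) = St (Suc t) - W - LK ** V ** transpose (Lg t)"
    using ric_G[OF symmS[OF St_psd] sV Minv(1)[OF St_psd[of t]], of A LK W] unfolding kf_L_def by simp
  have g2: "(A - Lg t ** C) ** Sig ** transpose (A - LK ** C) = Sig - W - Lg t ** V ** transpose LK"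
    using ric_G[OF sSig sV Minv(1)[OF Sig_psd], of A "Lg t" W] dare by simp
  have "transpose ((A - Lg t ** C) ** Sig ** transpose (A - LK ** C)) = transpose (Sig - W - Lg t ** V ** transpose LK)"
    using g2 by simp
  then have g2': "(A - LK ** C) ** Sig ** transpose (A - Lg t ** C) = Sig - W - LK ** V ** transpose (Lg t)"
    using sSig sW sV unfolding symm_def by (simp add: matrix_transpose_mul matrix_mul_assoc tr_diff)
  show ?thesis using g1 g2' by (simp add: mm_ldiff mm_rdiff)
qed

lemma E_id:
  assumes "t \<ge> 1"
  shows "y \<bullet> ((St t - Sig) *v x) = ((ff ^^ (t - 1)) y) \<bullet> ((W - Sig) *v (transpose (kf_Psi A C W V t 1) *v x))"
  using assms
proof (induction t arbitrary: x y rule: dec_induct)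
  case base
  then show ?case using St1 by simp
next
  case (step n)
  have P: "kf_Psi A C W V (Suc n) 1 = (A - Lg n ** C) ** kf_Psi A C W V n 1" using step(1) by simp
  let ?x = "transpose (A - Lg n ** C) *v x"
  have "y \<bullet> ((St (Suc n) - Sig) *v x) = y \<bullet> ((A - LK ** C) *v ((St n - Sig) *v ?x))"
    by (simp only: M1 matrix_vector_mul_assoc[symmetric])
  also have "\<dots> = ff y \<bullet> ((St n - Sig) *v ?x)" unfolding ff_def by (rule dot_transpose)
  also have "\<dots> = ((ff ^^ (n - 1)) (ff y)) \<bullet> ((W - Sig) *v (transpose (kf_Psi A C W V n 1) *v ?x))"
    by (rule step.IH)
  also have "(ff ^^ (n - 1)) (ff y) = (ff ^^ (Suc n - 1)) y"
    using step(1) by (metis Suc_diff_1 diff_Suc_1 funpow_Suc_right less_eq_Suc_le comp_apply le_simps(3) not_one_le_zero zero_less_iff_neq_zero)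
  also have "transpose (kf_Psi A C W V n 1) *v ?x = transpose (kf_Psi A C W V (Suc n) 1) *v x"
    by (simp only: P mv_tr_mul)
  finally show ?case .
qed

lemma L_id: "Lg t - LK = (A - Lg t ** C) ** (St t - Sig) ** transpose C ** matrix_inv (C ** Sig ** transpose C + V)"
proof -
  define M where "M = C ** Sig ** transpose C + V"
  define Mt where "Mt = C ** St t ** transpose C + V"
  have invM: "invertible M" unfolding M_def by (rule Minv(1)[OF Sig_psd])
  have invMt: "invertible Mt" unfolding Mt_def by (rule Minv(1)[OF St_psd])
  have a1: "Lg t ** Mt = A ** St t ** transpose C"
    unfolding kf_L_def kgain_def Mt_def[symmetric] using minv(2)[OF invMt] by (simp flip: matrix_mul_assoc)
  have h1: "Lg t ** C ** St t ** transpose C = A ** St t ** transpose C - Lg t ** V"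
    using a1 unfolding Mt_def by (simp add: matrix_add_ldistrib matrix_mul_assoc algebra_simps)
  have a2: "LK ** M = A ** Sig ** transpose C"
    unfolding kgain_def M_def[symmetric] using minv(2)[OF invM] by (simp flip: matrix_mul_assoc)
  have h2: "LK ** C ** Sig ** transpose C = A ** Sig ** transpose C - LK ** V"
    using a2 unfolding M_def by (simp add: matrix_add_ldistrib matrix_mul_assoc algebra_simps)
  have "(Lg t - LK) ** M = (A - Lg t ** C) ** (St t - Sig) ** transpose C"
    unfolding M_def by (simp add: malg h1 h2 algebra_simps)
  then have "(Lg t - LK) ** M ** matrix_inv M = (A - Lg t ** C) ** (St t - Sig) ** transpose C ** matrix_inv M" by simp
  then show ?thesis using minv(1)[OF invM] unfolding M_def[symmetric] by (simp flip: matrix_mul_assoc)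
qed

end


lemma loew_lb:
  assumes "loewner_le (c *\<^sub>R mat 1) (M::real^'n^'n)"
  shows "c * (norm x)^2 \<le> x \<bullet> (M *v x)"
proof -
  have "0 \<le> x \<bullet> ((M - c *\<^sub>R mat 1) *v x)" using assms unfolding loewner_le_def psd_def by blast
  then show ?thesis by (simp add: matrix_vector_mult_diff_rdistrib smat_vec inner_diff_right power2_norm_eq_inner)
qed

lemma qf_ub: "x \<bullet> ((M::real^'n^'n) *v x) \<le> spec_norm M * (norm x)^2"
proof -
  have "x \<bullet> (M *v x) \<le> norm x * norm (M *v x)" by (rule Cauchy_Schwarz_ineq2[THEN order_trans[OF abs_ge_self]])
  also have "\<dots> \<le> norm x * (spec_norm M * norm x)" by (rule mult_left_mono[OF sn_bound norm_ge_zero])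
  finally show ?thesis by (simp add: power2_eq_square mult_ac)
qed

lemma sq_le_imp: "a * u^2 \<le> b * v^2 \<Longrightarrow> a > 0 \<Longrightarrow> b \<ge> 0 \<Longrightarrow> v \<ge> 0 \<Longrightarrow> u \<ge> 0 \<Longrightarrow> u \<le> sqrt (b / a) * v"
  for a b u v :: real
proof -
  assume h: "a * u^2 \<le> b * v^2" "a > 0" "b \<ge> 0" "v \<ge> 0" "u \<ge> 0"
  have ba: "b / a \<ge> 0" by (rule divide_nonneg_pos[OF h(3) h(2)])
  have "u^2 \<le> (b / a) * v^2" using h(1,2) by (simp add: field_simps)
  also have "(b / a) * v^2 = (sqrt (b / a) * v)^2"
    by (simp only: power_mult_distrib real_sqrt_pow2[OF ba])
  finally have "u^2 \<le> (sqrt (b / a) * v)^2" .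
  moreover have "0 \<le> sqrt (b / a) * v" by (rule mult_nonneg_nonneg[OF real_sqrt_ge_zero[OF ba] h(4)])
  ultimately show ?thesis by (rule power2_le_imp_le)
qed

lemma eig_lb:
  fixes W :: "real^'n^'n"
  assumes "symm W"
  shows "lambda_min W * (norm x)^2 \<le> x \<bullet> (W *v x)"
  using conjunct1[OF eig_min[OF assms]] by (rule spec)

lemma eig_vec:
  fixes W :: "real^'n^'n"
  assumes "symm W"
  obtains v where "v \<noteq> 0" "v \<bullet> (W *v v) = lambda_min W * (norm v)^2"
proof -
  have "\<exists>v. v \<noteq> 0 \<and> W *v v = lambda_min W *\<^sub>R v" by (rule conjunct2[OF eig_min[OF assms]])
  then obtain v where vv: "v \<noteq> 0 \<and> W *v v = lambda_min W *\<^sub>R v" by (rule exE)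
  have q: "v \<bullet> (W *v v) = lambda_min W * (norm v)^2"
    by (simp only: conjunct2[OF vv] inner_scaleR_right power2_norm_eq_inner)
  show ?thesis by (rule that[OF conjunct1[OF vv] q])
qed

lemma eig_ge:
  fixes W :: "real^'n^'n"
  assumes "symm W" and lo: "\<And>x. a * (norm x)^2 \<le> x \<bullet> (W *v x)"
  shows "a \<le> lambda_min W"
proof -
  obtain v where v: "v \<noteq> 0" "v \<bullet> (W *v v) = lambda_min W * (norm v)^2" by (rule eig_vec[OF assms(1)])
  have nv: "(norm v)^2 > 0" using v(1) by simp
  have "a * (norm v)^2 \<le> v \<bullet> (W *v v)" by (rule lo)
  also have "\<dots> = lambda_min W * (norm v)^2" by (rule v(2))
  finally show ?thesis by (rule mult_le_cancel_right_pos[OF nv, THEN iffD1])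
qed

lemma eig_le:
  fixes W :: "real^'n^'n"
  assumes "symm W" and hi: "\<And>x. x \<bullet> (W *v x) \<le> N * (norm x)^2"
  shows "lambda_min W \<le> N"
proof -
  obtain v where v: "v \<noteq> 0" "v \<bullet> (W *v v) = lambda_min W * (norm v)^2" by (rule eig_vec[OF assms(1)])
  have nv: "(norm v)^2 > 0" using v(1) by simp
  have "lambda_min W * (norm v)^2 = v \<bullet> (W *v v)" by (rule v(2)[symmetric])
  also have "\<dots> \<le> N * (norm v)^2" by (rule hi)
  finally show ?thesis by (rule mult_le_cancel_right_pos[OF nv, THEN iffD1])
qed



theorem lemmaE5:
  fixes A W W12 Sigma :: "real^'n^'n"
    and C :: "real^'n^'p"
    and V :: "real^'p^'p"
    and L :: "real^'p^'n"
    and \<alpha>0 \<alpha>1 \<psi> \<sigma>bar \<kappa>F \<gamma>F :: real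
    and t :: nat
  assumes W_psd: "psd W" and V_psd: "psd V"
    and W12: "psd W12" "W12 ** W12 = W"
    and stab: "stabilizable A W12"
    and det: "detectable A C"
    and Sigma_psd: "psd Sigma"
    and Sigma_dare: "Sigma = riccati A C W V Sigma"
    and Sigma_unique: "\<And>S. psd S \<Longrightarrow> S = riccati A C W V S \<Longrightarrow> S = Sigma"
    and L_def: "L = kgain A C V Sigma"
    and pos: "\<alpha>0 > 0" "\<alpha>1 > 0" "\<psi> > 0" "\<sigma>bar > 0"
    and W_lo: "loewner_le (\<alpha>0 *\<^sub>R mat 1) W" and W_hi: "loewner_le W (\<alpha>1 *\<^sub>R mat 1)"
    and V_lo: "loewner_le (\<alpha>0 *\<^sub>R mat 1) V" and V_hi: "loewner_le V (\<alpha>1 *\<^sub>R mat 1)"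
    and C_bd: "spec_norm C \<le> \<psi>"
    and Sigma_bd: "spec_norm Sigma \<le> \<sigma>bar"
    and kappa_def: "\<kappa>F = sqrt (\<sigma>bar / \<alpha>0)"
    and gamma_def: "\<gamma>F = 1 - \<alpha>0 / (2 * \<sigma>bar)"
    and t_ge: "t \<ge> 1"
  shows "spec_norm (kf_Psi A C W V t 1)
           \<le> sqrt (spec_norm (W + L ** V ** transpose L) * \<kappa>F\<^sup>2
                    / (lambda_min W * (1 - \<gamma>F\<^sup>2)))
         \<and> spec_norm (kf_Sigma A C W V t - Sigma)
           \<le> \<kappa>F\<^sup>2 * \<gamma>F ^ (t - 1) * spec_norm (W - Sigma)
              * sqrt (spec_norm (W + L ** V ** transpose L)
                      / (lambda_min W * (1 - \<gamma>F\<^sup>2)))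
         \<and> spec_norm (kf_L A C W V t - L)
           \<le> \<kappa>F ^ 3 * \<gamma>F ^ t * spec_norm (W - Sigma) * spec_norm C / lambda_min V
              * sqrt (spec_norm (W + L ** V ** transpose L)
                      / (lambda_min W * (1 - \<gamma>F\<^sup>2)))"
proof -
  have Wlo: "\<And>x. \<alpha>0 * (norm x)^2 \<le> x \<bullet> (W *v x)" using loew_lb[OF W_lo] .
  have Vlo: "\<And>x. \<alpha>0 * (norm x)^2 \<le> x \<bullet> (V *v x)" using loew_lb[OF V_lo] .
  have Sub: "\<And>x. x \<bullet> (Sigma *v x) \<le> \<sigma>bar * (norm x)^2"
    using qf_ub[of _ Sigma] Sigma_bd by (meson mult_right_mono order_trans zero_le_power2)
  interpret kf A W Sigma C V \<alpha>0 \<sigma>bar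
    by unfold_locales (use W_psd V_psd pos Wlo Vlo Sigma_psd Sigma_dare Sub in auto)
  have a0: "\<alpha>0 > 0" using pos by simp
  have sb: "\<sigma>bar > 0" using pos by simp
  have asb: "\<alpha>0 \<le> \<sigma>bar" by (rule a0_le_sb)
  define N where "N = spec_norm (W + L ** V ** transpose L)"
  define lW where "lW = lambda_min W"
  define lV where "lV = lambda_min V"
  define E where "E = kf_Sigma A C W V t - Sigma"
  define s where "s = sqrt (N / (lW * (1 - \<gamma>F\<^sup>2)))"
  have kpos: "\<kappa>F > 0" using kappa_def a0 sb by simp
  have k2: "\<kappa>F^2 = \<sigma>bar / \<alpha>0" using kappa_def a0 sb by simp
  have hh: "\<alpha>0 / (2 * \<sigma>bar) \<le> 1/2" using asb sb by (simp add: field_simps)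
  have gge: "\<gamma>F \<ge> 1/2" using gamma_def hh by linarith
  have glt: "\<gamma>F < 1" using gamma_def a0 sb by simp
  have rho: "1 - \<alpha>0 / \<sigma>bar \<le> \<gamma>F^2"
  proof -
    define d where "d = \<alpha>0 / (2 * \<sigma>bar)"
    have d2: "2 * d = \<alpha>0 / \<sigma>bar" unfolding d_def using sb by simp
    have "\<gamma>F^2 = 1 - 2 * d + d^2" unfolding gamma_def d_def[symmetric] by (simp add: power2_eq_square algebra_simps)
    then show ?thesis using d2 zero_le_power2[of d] by linarith
  qed
  have R1: "\<sigma>bar / \<alpha>0 - 1 \<le> (\<kappa>F * \<gamma>F)^2"
  proof -
    have e1: "(\<kappa>F * \<gamma>F)^2 = (\<sigma>bar / \<alpha>0) * \<gamma>F^2" by (simp only: power_mult_distrib k2)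
    have e2: "(\<sigma>bar / \<alpha>0) * (1 - \<alpha>0 / \<sigma>bar) \<le> (\<sigma>bar / \<alpha>0) * \<gamma>F^2"
      by (rule mult_left_mono[OF rho]) (use a0 sb in simp)
    have e3: "(\<sigma>bar / \<alpha>0) * (1 - \<alpha>0 / \<sigma>bar) = \<sigma>bar / \<alpha>0 - 1" using a0 sb by (simp add: field_simps)
    show ?thesis using e1 e2 e3 by linarith
  qed
  have lWlb: "\<alpha>0 \<le> lW" unfolding lW_def by (rule eig_ge[OF sW Wlo])
  have LVpsd: "0 \<le> x \<bullet> ((L ** V ** transpose L) *v x)" for x
    unfolding qf_sand by (rule psd_nn[OF V_psd])
  have lWN: "lW \<le> N" unfolding lW_def N_def
  proof (rule eig_le[OF sW])
    fix x
    have "x \<bullet> (W *v x) \<le> x \<bullet> ((W + L ** V ** transpose L) *v x)" using LVpsd[of x] unfolding qf_add by linarith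
    also have "\<dots> \<le> spec_norm (W + L ** V ** transpose L) * (norm x)^2" by (rule qf_ub)
    finally show "x \<bullet> (W *v x) \<le> spec_norm (W + L ** V ** transpose L) * (norm x)^2" .
  qed
  have lVlb: "\<alpha>0 \<le> lV" unfolding lV_def by (rule eig_ge[OF sV Vlo])
  have lVq: "\<And>x. lV * (norm x)^2 \<le> x \<bullet> (V *v x)" unfolding lV_def by (rule eig_lb[OF sV])
  have gnn: "0 \<le> \<gamma>F" using gge by linarith
  have gg1: "\<gamma>F * \<gamma>F < 1 * 1" by (rule mult_strict_mono[OF glt glt]) (use gnn in auto)
  have g2pos: "0 < 1 - \<gamma>F^2" using gg1 by (simp add: power2_eq_square)
  have g2le: "1 - \<gamma>F^2 \<le> 1" by simp
  have lWpos: "0 < lW" using lWlb a0 by linarith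
  have dp: "0 < lW * (1 - \<gamma>F^2)" by (rule mult_pos_pos[OF lWpos g2pos])
  have s1: "1 \<le> s"
  proof -
    have "lW * (1 - \<gamma>F^2) \<le> lW" by (rule mult_left_le[OF g2le]) (use lWpos in linarith)
    also have "\<dots> \<le> N" by (rule lWN)
    finally have "1 \<le> N / (lW * (1 - \<gamma>F\<^sup>2))" by (subst le_divide_eq_1_pos[OF dp])
    then show ?thesis unfolding s_def by simp
  qed
  have Psi_v: "norm (transpose (kf_Psi A C W V t 1) *v x) \<le> \<kappa>F * norm x" for x
  proof -
    have "\<alpha>0 * (norm (transpose (kf_Psi A C W V t 1) *v x))^2 \<le> \<sigma>bar * (norm x)^2"
      using Psi_bd[OF t_ge, of x] St_le[where t=t and x=x] Sub[of x] by linarith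
    then have "norm (transpose (kf_Psi A C W V t 1) *v x) \<le> sqrt (\<sigma>bar / \<alpha>0) * norm x"
      by (rule sq_le_imp[OF _ a0 _ norm_ge_zero norm_ge_zero]) (use sb in linarith)
    then show ?thesis unfolding kappa_def .
  qed
  have c1a: "spec_norm (kf_Psi A C W V t 1) \<le> \<kappa>F"
    using sn_le[of "transpose (kf_Psi A C W V t 1)", OF Psi_v] unfolding sn_transpose .
  have c1b: "sqrt (N * \<kappa>F\<^sup>2 / (lW * (1 - \<gamma>F\<^sup>2))) = \<kappa>F * s"
  proof -
    have e: "N * \<kappa>F\<^sup>2 / (lW * (1 - \<gamma>F\<^sup>2)) = \<kappa>F\<^sup>2 * (N / (lW * (1 - \<gamma>F\<^sup>2)))" by simp
    show ?thesis unfolding s_def e real_sqrt_mult using kpos by simp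
  qed
  have c1c: "\<kappa>F * 1 \<le> \<kappa>F * s" by (rule mult_left_mono[OF s1]) (use kpos in linarith)
  have claim1: "spec_norm (kf_Psi A C W V t 1) \<le> sqrt (N * \<kappa>F\<^sup>2 / (lW * (1 - \<gamma>F\<^sup>2)))"
    unfolding c1b using c1a c1c by linarith
  have r0: "0 \<le> 1 - \<alpha>0 / \<sigma>bar" using asb sb by (simp add: divide_le_eq_1_pos)
  have ffb: "norm ((ff ^^ k) y) \<le> \<kappa>F * \<gamma>F ^ k * norm y" for k y
  proof -
    have pk: "(1 - \<alpha>0 / \<sigma>bar) ^ k \<le> (\<gamma>F^2) ^ k" by (rule power_mono[OF rho r0])
    have "(1 - \<alpha>0 / \<sigma>bar) ^ k * \<sigma>bar * (norm y)^2 \<le> (\<gamma>F^2) ^ k * \<sigma>bar * (norm y)^2"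
      by (rule mult_right_mono[OF mult_right_mono[OF pk]]) (use sb in auto)
    then have "\<alpha>0 * (norm ((ff ^^ k) y))^2 \<le> (\<gamma>F^2) ^ k * \<sigma>bar * (norm y)^2"
      using ff_pow_norm[of k y] by linarith
    then have "norm ((ff ^^ k) y) \<le> sqrt ((\<gamma>F^2) ^ k * \<sigma>bar / \<alpha>0) * norm y"
      by (rule sq_le_imp[OF _ a0 _ norm_ge_zero norm_ge_zero]) (use sb in simp)
    also have "sqrt ((\<gamma>F^2) ^ k * \<sigma>bar / \<alpha>0) = \<gamma>F ^ k * \<kappa>F"
    proof -
      have p: "(\<gamma>F^2) ^ k = (\<gamma>F ^ k)^2" by (metis power_mult mult.commute)
      have e: "(\<gamma>F^2) ^ k * \<sigma>bar / \<alpha>0 = (\<gamma>F ^ k)^2 * (\<sigma>bar / \<alpha>0)" unfolding p by simp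
      have g0: "0 \<le> \<gamma>F ^ k" using gnn by simp
      show ?thesis unfolding kappa_def e real_sqrt_mult using g0 by simp
    qed
    finally show ?thesis by (simp add: mult_ac)
  qed
  have c0nn: "0 \<le> \<kappa>F^2 * \<gamma>F ^ (t - 1) * spec_norm (W - Sigma)"
    using gnn sn_nonneg[of "W - Sigma"] by simp
  have Ev: "norm (E *v x) \<le> \<kappa>F^2 * \<gamma>F ^ (t - 1) * spec_norm (W - Sigma) * norm x" for x
  proof -
    let ?c = "\<kappa>F^2 * \<gamma>F ^ (t - 1) * spec_norm (W - Sigma)"
    let ?p = "transpose (kf_Psi A C W V t 1) *v x"
    have wb: "norm ((W - Sigma) *v ?p) \<le> spec_norm (W - Sigma) * (\<kappa>F * norm x)"
    proof -
      have "norm ((W - Sigma) *v ?p) \<le> spec_norm (W - Sigma) * norm ?p" by (rule sn_bound)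
      also have "\<dots> \<le> spec_norm (W - Sigma) * (\<kappa>F * norm x)" by (rule mult_left_mono[OF Psi_v sn_nonneg])
      finally show ?thesis .
    qed
    have "(norm (E *v x))^2 = (E *v x) \<bullet> (E *v x)" by (simp only: power2_norm_eq_inner)
    also have "\<dots> = ((ff ^^ (t - 1)) (E *v x)) \<bullet> ((W - Sigma) *v ?p)"
      unfolding E_def by (rule E_id[OF t_ge])
    also have "\<dots> \<le> norm ((ff ^^ (t - 1)) (E *v x)) * norm ((W - Sigma) *v ?p)"
      by (rule Cauchy_Schwarz_ineq2[THEN order_trans[OF abs_ge_self]])
    also have "\<dots> \<le> (\<kappa>F * \<gamma>F ^ (t - 1) * norm (E *v x)) * (spec_norm (W - Sigma) * (\<kappa>F * norm x))"
      by (rule mult_mono[OF ffb wb]) (use kpos gnn in simp_all)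
    also have "\<dots> = (?c * norm x) * norm (E *v x)" by (simp add: power2_eq_square mult_ac)
    finally have h: "norm (E *v x) * norm (E *v x) \<le> (?c * norm x) * norm (E *v x)"
      by (simp only: power2_eq_square)
    show ?thesis
    proof (cases "E *v x = 0")
      case True then show ?thesis using c0nn by simp
    next
      case False
      then have nz: "0 < norm (E *v x)" by simp
      show ?thesis by (rule mult_le_cancel_right_pos[OF nz, THEN iffD1, OF h])
    qed
  qed
  have Enorm: "spec_norm E \<le> \<kappa>F^2 * \<gamma>F ^ (t - 1) * spec_norm (W - Sigma)" by (rule sn_le[OF Ev])
  have c2: "(\<kappa>F^2 * \<gamma>F ^ (t - 1) * spec_norm (W - Sigma)) * 1 \<le> (\<kappa>F^2 * \<gamma>F ^ (t - 1) * spec_norm (W - Sigma)) * s"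
    by (rule mult_left_mono[OF s1 c0nn])
  have claim2: "spec_norm E \<le> \<kappa>F^2 * \<gamma>F ^ (t - 1) * spec_norm (W - Sigma) * s"
    using Enorm c2 by linarith
  have kg0: "0 \<le> \<kappa>F * \<gamma>F" using kpos gnn by simp
  have Phv: "norm (transpose (A - Lg t ** C) *v x) \<le> \<kappa>F * \<gamma>F * norm x" for x
  proof -
    have "\<alpha>0 * (norm (transpose (A - Lg t ** C) *v x))^2 \<le> (\<sigma>bar - \<alpha>0) * (norm x)^2"
      by (rule Phit_bd[OF t_ge])
    then have "norm (transpose (A - Lg t ** C) *v x) \<le> sqrt ((\<sigma>bar - \<alpha>0) / \<alpha>0) * norm x"
      by (rule sq_le_imp[OF _ a0 _ norm_ge_zero norm_ge_zero]) (use asb in linarith)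
    also have "\<dots> \<le> \<kappa>F * \<gamma>F * norm x"
    proof (rule mult_right_mono[OF _ norm_ge_zero])
      have e: "(\<sigma>bar - \<alpha>0) / \<alpha>0 = \<sigma>bar / \<alpha>0 - 1" using a0 by (simp add: diff_divide_distrib)
      have "sqrt ((\<sigma>bar - \<alpha>0) / \<alpha>0) \<le> sqrt ((\<kappa>F * \<gamma>F)^2)"
        by (rule real_sqrt_le_mono) (use e R1 in linarith)
      also have "sqrt ((\<kappa>F * \<gamma>F)^2) = \<kappa>F * \<gamma>F" using kg0 by simp
      finally show "sqrt ((\<sigma>bar - \<alpha>0) / \<alpha>0) \<le> \<kappa>F * \<gamma>F" .
    qed
    finally show ?thesis .
  qed
  have Phn: "spec_norm (A - Lg t ** C) \<le> \<kappa>F * \<gamma>F"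
    using sn_le[of "transpose (A - Lg t ** C)", OF Phv] unfolding sn_transpose .
  define M where "M = C ** Sigma ** transpose C + V"
  have invM: "invertible M" unfolding M_def by (rule Minv(1)[OF Sigma_psd])
  have lVpos: "lV > 0" using lVlb a0 by linarith
  have Miv: "lV * norm (matrix_inv M *v z) \<le> norm z" for z
  proof -
    let ?w = "matrix_inv M *v z"
    have Mw: "M *v ?w = z" by (simp add: matrix_vector_mul_assoc minv(1)[OF invM])
    have "lV * (norm ?w)^2 \<le> ?w \<bullet> (V *v ?w)" by (rule lVq)
    also have "\<dots> \<le> ?w \<bullet> (M *v ?w)" unfolding M_def by (rule Minv(2)[OF Sigma_psd])
    also have "\<dots> \<le> norm ?w * norm z" unfolding Mw
      by (rule Cauchy_Schwarz_ineq2[THEN order_trans[OF abs_ge_self]])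
    finally have h: "(lV * norm ?w) * norm ?w \<le> norm z * norm ?w" by (simp add: power2_eq_square mult_ac)
    show ?thesis
    proof (cases "?w = 0")
      case True then show ?thesis by simp
    next
      case False
      then have nz: "0 < norm ?w" by simp
      show ?thesis by (rule mult_le_cancel_right_pos[OF nz, THEN iffD1, OF h])
    qed
  qed
  have Lv: "norm ((Lg t - LK) *v z) \<le> (\<kappa>F * \<gamma>F) * spec_norm E * spec_norm C / lV * norm z" for z
  proof -
    let ?w = "matrix_inv M *v z"
    have eq: "(Lg t - LK) *v z = (A - Lg t ** C) *v (E *v (transpose C *v ?w))"
      unfolding E_def M_def by (simp only: L_id matrix_vector_mul_assoc[symmetric])
    have n1: "norm (transpose C *v ?w) \<le> spec_norm C * norm ?w"
      using sn_bound[of "transpose C" ?w] unfolding sn_transpose .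
    have n2: "norm (E *v (transpose C *v ?w)) \<le> spec_norm E * (spec_norm C * norm ?w)"
    proof -
      have "norm (E *v (transpose C *v ?w)) \<le> spec_norm E * norm (transpose C *v ?w)" by (rule sn_bound)
      also have "\<dots> \<le> spec_norm E * (spec_norm C * norm ?w)" by (rule mult_left_mono[OF n1 sn_nonneg])
      finally show ?thesis .
    qed
    have mz: "norm ?w \<le> norm z / lV" using Miv[of z] lVpos by (simp add: pos_le_divide_eq mult.commute)
    have "norm ((Lg t - LK) *v z) \<le> spec_norm (A - Lg t ** C) * norm (E *v (transpose C *v ?w))"
      unfolding eq by (rule sn_bound)
    also have "\<dots> \<le> (\<kappa>F * \<gamma>F) * (spec_norm E * (spec_norm C * norm ?w))"
      by (rule mult_mono[OF Phn n2 kg0 norm_ge_zero])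
    also have "\<dots> \<le> (\<kappa>F * \<gamma>F) * (spec_norm E * (spec_norm C * (norm z / lV)))"
      by (rule mult_left_mono[OF mult_left_mono[OF mult_left_mono[OF mz sn_nonneg] sn_nonneg] kg0])
    also have "\<dots> = (\<kappa>F * \<gamma>F) * spec_norm E * spec_norm C / lV * norm z" by (simp add: mult_ac)
    finally show ?thesis .
  qed
  have Ln: "spec_norm (Lg t - LK) \<le> (\<kappa>F * \<gamma>F) * spec_norm E * spec_norm C / lV" by (rule sn_le[OF Lv])
  have claim3: "spec_norm (Lg t - LK) \<le> \<kappa>F ^ 3 * \<gamma>F ^ t * spec_norm (W - Sigma) * spec_norm C / lV * s"
  proof -
    have "(\<kappa>F * \<gamma>F) * spec_norm E * spec_norm C / lV
        \<le> (\<kappa>F * \<gamma>F) * (\<kappa>F^2 * \<gamma>F ^ (t - 1) * spec_norm (W - Sigma) * s) * spec_norm C / lV"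
      by (rule divide_right_mono[OF mult_right_mono[OF mult_left_mono[OF claim2 kg0] sn_nonneg]]) (use lVpos in linarith)
    also have "\<dots> = \<kappa>F ^ 3 * \<gamma>F ^ t * spec_norm (W - Sigma) * spec_norm C / lV * s"
    proof -
      obtain k where tk: "t = Suc k" using t_ge by (cases t) auto
      show ?thesis unfolding tk by (simp add: power3_eq_cube power2_eq_square mult_ac)
    qed
    finally show ?thesis using Ln by linarith
  qed
  have LL: "kgain A C V Sigma = L" using L_def by simp
  show ?thesis
    using claim1 claim2 claim3 unfolding N_def lW_def lV_def s_def E_def LL by (intro conjI)
qed

end
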